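(* Let $\pi$ be irreducible combinatorial data, $w\in\mathbb R^{\mathcal A}$, and let $\underline\gamma^*$ be a finite path in the Rauzy diagram starting at $\pi$. There exists an affine interval exchange map with data $\pi$ and slope vector $\exp w$ such that the first steps of its Rauzy–Veech algorithm are defined and follow the path $\underline\gamma^*$ if and only if there exists $\lambda$ with $\lambda_\alpha>0$ for all $\alpha$ and $\sum_\alpha\lambda_\alpha w_\alpha=0$ such that the first steps of the Rauzy–Veech algorithm of the standard i.e.m. $T_{\pi,\lambda}$ are defined and follow $\underline\gamma^*$.
   Context: Affine i.e.m. with data $\pi$: map on an interval $I$ sending each interval $I^t_\alpha$ of a partition ordered by $\pi_t$ increasingly and affinely onto the interval $I^b_\alpha$ of a partition ordered by $\pi_b$; slope vector $\exp w$ means $|I^b_\alpha|=e^{w_\alpha}|I^t_\alpha|$. Standard i.e.m. $T_{\pi,\lambda}$: the case $|I^t_\alpha|=|I^b_\alpha|=\lambda_\alpha$ (a translation on each piece). Rauzy–Veech step: let $\pi_t(\alpha_t)=\pi_b(\alpha_b)=d$ and let $u^t_{d-1},u^b_{d-1}$ be the left endpoints of $I^t_{\alpha_t}$, $I^b_{\alpha_b}$; if they differ, replace the map by its first return map to $(0,\max(u^t_{d-1},u^b_{d-1}))$, which is again an (affine) i.e.m. with data $R_t(\pi)$ if $u^t_{d-1}<u^b_{d-1}$ (top type: $\pi_t$ unchanged, $\alpha_b$ moved in the bottom line to just after $\alpha_t$) or $R_b(\pi)$ if $u^b_{d-1}<u^t_{d-1}$ (bottom type, symmetric). The arrows $\pi\to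 R_t(\pi)$, $\pi\to R_b(\pi)$ form the Rauzy diagram, and the successive steps define a path in it. *)

theory Defs
  imports Complex_Main
begin

definition comb_data :: "('a::finite \<Rightarrow> nat) \<Rightarrow> ('a \<Rightarrow> nat) \<Rightarrow> bool" where
  "comb_data pt pb \<longleftrightarrow> bij_betw pt UNIV {1..card (UNIV :: 'a set)} \<and> bij_betw pb UNIV {1..card (UNIV :: 'a set)}"

definition irreducible :: "('a::finite \<Rightarrow> nat) \<Rightarrow> ('a \<Rightarrow> nat) \<Rightarrow> bool" where
  "irreducible pt pb \<longleftrightarrow>
     (\<forall>k. 1 \<le> k \<and> k < card (UNIV :: 'a set) \<longrightarrow> {a. pt a \<le> k} \<noteq> {a. pb a \<le> k})"

text \<open>Arrows of the Rauzy diagram: top type or bottom type.  A finite path in the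
  Rauzy diagram starting at \<pi> is the list of the types of its successive arrows.\<close>
datatype rtype = TopT | BotT

text \<open>State of an affine i.e.m.: (\<pi>_t, \<pi>_b, top lengths lt, log-slopes w), where
  |I^t_\<alpha>| = lt \<alpha> and |I^b_\<alpha>| = exp (w \<alpha>) * lt \<alpha>.  A standard i.e.m. T_{\<pi>,\<lambda>}
  is the state (\<pi>_t, \<pi>_b, \<lambda>, 0).\<close>
type_synonym 'a aiem = "('a \<Rightarrow> nat) \<times> ('a \<Rightarrow> nat) \<times> ('a \<Rightarrow> real) \<times> ('a \<Rightarrow> real)"

definition is_aiem :: "('a::finite \<Rightarrow> real) \<Rightarrow> ('a \<Rightarrow> real) \<Rightarrow> bool" where
  "is_aiem lt w \<longleftrightarrow> (\<forall>a. lt a > 0) \<and> (\<Sum>a\<in>UNIV. exp (w a) * lt a) = (\<Sum>a\<in>UNIV. lt a)"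

definition alpha_t :: "('a::finite) aiem \<Rightarrow> 'a" where
  "alpha_t s = (case s of (pt, pb, lt, w) \<Rightarrow> (THE a. pt a = card (UNIV :: 'a set)))"

definition alpha_b :: "('a::finite) aiem \<Rightarrow> 'a" where
  "alpha_b s = (case s of (pt, pb, lt, w) \<Rightarrow> (THE a. pb a = card (UNIV :: 'a set)))"

definition u_t :: "('a::finite) aiem \<Rightarrow> real" where
  "u_t s = (case s of (pt, pb, lt, w) \<Rightarrow> (\<Sum>a\<in>{a. pt a < card (UNIV :: 'a set)}. lt a))"

definition u_b :: "('a::finite) aiem \<Rightarrow> real" where
  "u_b s = (case s of (pt, pb, lt, w) \<Rightarrow> (\<Sum>a\<in>{a. pb a < card (UNIV :: 'a set)}. exp (w a) * lt a))"

text \<open>Move letter x to the position just after letter y (x currently in last position).\<close>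
definition move_after :: "('a \<Rightarrow> nat) \<Rightarrow> 'a \<Rightarrow> 'a \<Rightarrow> ('a \<Rightarrow> nat)" where
  "move_after p x y = (\<lambda>a. if a = x then p y + 1 else if p a > p y then p a + 1 else p a)"

text \<open>One Rauzy--Veech step: data of the first return map to (0, max(u^t,u^b)).
  Top type (u^t < u^b): the piece I^t_{\<alpha>_t} is shortened by |I^b_{\<alpha>_b}|, and the
  letter \<alpha>_b (now mapped by T^2) gets slope w_{\<alpha>_b}+w_{\<alpha>_t}.
  Bottom type (u^b < u^t): the piece I^t_{\<alpha>_b} splits, its right part (preimage of
  I^t_{\<alpha>_t}, of length |I^t_{\<alpha>_t}| e^{-w_{\<alpha>_b}}) becomes the new \<alpha>_t piece with
  slope w_{\<alpha>_t}+w_{\<alpha>_b}.\<close>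
definition rv_step :: "('a::finite) aiem \<Rightarrow> 'a aiem" where
  "rv_step s = (case s of (pt, pb, lt, w) \<Rightarrow>
     let aT = alpha_t s; aB = alpha_b s in
     if u_t s < u_b s then
       (pt, move_after pb aB aT, lt(aT := lt aT - exp (w aB) * lt aB), w(aB := w aB + w aT))
     else
       (move_after pt aT aB, pb,
        lt(aT := lt aT * exp (- w aB), aB := lt aB - lt aT * exp (- w aB)),
        w(aT := w aT + w aB)))"

definition rv_type :: "('a::finite) aiem \<Rightarrow> rtype" where
  "rv_type s = (if u_t s < u_b s then TopT else BotT)"

fun rv_follows :: "('a::finite) aiem \<Rightarrow> rtype list \<Rightarrow> bool" where
  "rv_follows s [] = True"
| "rv_follows s (t # ts) \<longleftrightarrow> u_t s \<noteq> u_b s \<and> rv_type s = t \<and> rv_follows (rv_step s) ts"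

end

theory Submission
  imports Defs
begin

definition lastl :: "('a::finite \<Rightarrow> nat) \<Rightarrow> 'a" where
  "lastl p = (THE a. p a = card (UNIV::'a set))"

definition bijd :: "('a::finite \<Rightarrow> nat) \<Rightarrow> bool" where
  "bijd p \<longleftrightarrow> bij_betw p UNIV {1..card (UNIV::'a set)}"

lemma card_pos: "card (UNIV::'a::finite set) \<ge> 1"
  by (simp add: Suc_leI finite_UNIV_card_ge_0)

lemma bijd_range: "bijd (p::'a::finite \<Rightarrow> nat) \<Longrightarrow> 1 \<le> p a \<and> p a \<le> card (UNIV::'a set)"
  unfolding bijd_def bij_betw_def by auto

lemma bijd_inj: "bijd p \<Longrightarrow> p a = p b \<Longrightarrow> a = b"
  unfolding bijd_def bij_betw_def by (auto dest: injD)

lemma lastl: "bijd (p::'a::finite \<Rightarrow> nat) \<Longrightarrow> p (lastl p) = card (UNIV::'a set)"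
proof -
  assume b: "bijd p"
  have "card (UNIV::'a set) \<in> p ` UNIV" using b card_pos unfolding bijd_def bij_betw_def by auto
  then obtain a where a: "p a = card (UNIV::'a set)" by auto
  have "\<exists>!a. p a = card (UNIV::'a set)" using a bijd_inj[OF b] by metis
  thus ?thesis unfolding lastl_def by (rule theI')
qed

lemma lastl_unique: "bijd (p::'a::finite \<Rightarrow> nat) \<Longrightarrow> p a = card (UNIV::'a set) \<Longrightarrow> a = lastl p"
  using lastl bijd_inj by metis

lemma less_iff: "bijd (p::'a::finite \<Rightarrow> nat) \<Longrightarrow> p a < card (UNIV::'a set) \<longleftrightarrow> a \<noteq> lastl p"
proof -
  assume b: "bijd p"
  have "p a \<le> card (UNIV::'a set)" using bijd_range[OF b] by blast
  moreover have "p a = card (UNIV::'a set) \<longleftrightarrow> a = lastl p" using lastl_unique[OF b] lastl[OF b] by blast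
  ultimately show ?thesis by linarith
qed

lemma less_set: "bijd (p::'a::finite \<Rightarrow> nat) \<Longrightarrow> {a. p a < card (UNIV::'a set)} = UNIV - {lastl p}"
  using less_iff by blast

lemma le_set: "bijd (p::'a::finite \<Rightarrow> nat) \<Longrightarrow> {a. p a \<le> card (UNIV::'a set) - 1} = UNIV - {lastl p}"
proof -
  assume b: "bijd p"
  have "p a \<le> card (UNIV::'a set) - 1 \<longleftrightarrow> p a < card (UNIV::'a set)" for a
    using bijd_range[OF b, of a] by linarith
  thus ?thesis using less_set[OF b] by blast
qed

definition irr :: "('a::finite \<Rightarrow> nat) \<Rightarrow> ('a \<Rightarrow> nat) \<Rightarrow> bool" where
  "irr p q \<longleftrightarrow> (\<forall>k. 1 \<le> k \<and> k < card (UNIV::'a set) \<longrightarrow> {a. p a \<le> k} \<noteq> {a. q a \<le> k})"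

lemma irr_sym: "irr p q \<Longrightarrow> irr q p"
  unfolding irr_def by metis

lemma irr_move:
  fixes p q :: "'a::finite \<Rightarrow> nat"
  assumes "irr p q" "q x = card (UNIV::'a set)" "p y = card (UNIV::'a set)" "x \<noteq> y"
  shows "irr p (move_after q x y)"
  unfolding irr_def
proof (intro allI impI)
  fix k assume k: "1 \<le> k \<and> k < card (UNIV::'a set)"
  show "{a. p a \<le> k} \<noteq> {a. move_after q x y a \<le> k}"
  proof (cases "k \<le> q y")
    case True
    have "{a. move_after q x y a \<le> k} = {a. q a \<le> k}"
      using True k assms(2) unfolding move_after_def by auto
    thus ?thesis using assms(1) k unfolding irr_def by auto
  next
    case False
    have "y \<in> {a. move_after q x y a \<le> k}" using False assms(4) unfolding move_after_def by auto
    moreover have "y \<notin> {a. p a \<le> k}" using assms(3) k by auto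
    ultimately show ?thesis by blast
  qed
qed

lemma bijd_move:
  assumes b: "bijd (q::'a::finite \<Rightarrow> nat)" and x: "q x = card (UNIV::'a set)" and xy: "x \<noteq> y"
  shows "bijd (move_after q x y)"
proof -
  let ?m = "move_after q x y"
  have "q y \<noteq> card (UNIV::'a set)" using bijd_inj[OF b, of x y] x xy by metis
  hence qy: "q y < card (UNIV::'a set)" using bijd_range[OF b, of y] by linarith
  have inj: "inj ?m"
  proof (rule injI)
    fix a b' assume e: "?m a = ?m b'"
    show "a = b'" using e bijd_inj[OF b] qy unfolding move_after_def
      by (auto split: if_splits)
  qed
  have sub: "range ?m \<subseteq> {1..card (UNIV::'a set)}"
  proof
    fix z assume "z \<in> range ?m"
    then obtain a where z: "z = ?m a" by auto
    have "a \<noteq> x \<Longrightarrow> q a \<noteq> card (UNIV::'a set)" using bijd_inj[OF b] x by metis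
    thus "z \<in> {1..card (UNIV::'a set)}" using z bijd_range[OF b, of a] qy unfolding move_after_def
      by (auto split: if_splits)
  qed
  have "card (range ?m) = card (UNIV::'a set)" using inj card_image by blast
  hence "range ?m = {1..card (UNIV::'a set)}" using sub by (intro card_subset_eq) auto
  thus ?thesis using inj unfolding bijd_def bij_betw_def by auto
qed

definition good :: "('a::finite \<Rightarrow> nat) \<Rightarrow> ('a \<Rightarrow> nat) \<Rightarrow> bool" where
  "good pt pb \<longleftrightarrow> bijd pt \<and> bijd pb \<and> irr pt pb"

lemma good_iff: "comb_data pt pb \<and> irreducible pt pb \<longleftrightarrow> good pt pb"
  unfolding good_def comb_data_def irreducible_def bijd_def irr_def by blast

definition rv_step_t :: "rtype \<Rightarrow> ('a::finite) aiem \<Rightarrow> 'a aiem" where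
  "rv_step_t t s = (case s of (pt, pb, lt, w) \<Rightarrow>
     let aT = lastl pt; aB = lastl pb in
     if t = TopT then
       (pt, move_after pb aB aT, lt(aT := lt aT - exp (w aB) * lt aB), w(aB := w aB + w aT))
     else
       (move_after pt aT aB, pb,
        lt(aT := lt aT * exp (- w aB), aB := lt aB - lt aT * exp (- w aB)),
        w(aT := w aT + w aB)))"

lemma step_top: "rv_step_t TopT (pt,pb,lt,w) = (pt, move_after pb (lastl pb) (lastl pt),
   lt(lastl pt := lt (lastl pt) - exp (w (lastl pb)) * lt (lastl pb)), w(lastl pb := w (lastl pb) + w (lastl pt)))"
  unfolding rv_step_t_def by (simp add: Let_def)

lemma step_bot: "rv_step_t BotT (pt,pb,lt,w) = (move_after pt (lastl pt) (lastl pb), pb,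
        lt(lastl pt := lt (lastl pt) * exp (- w (lastl pb)), lastl pb := lt (lastl pb) - lt (lastl pt) * exp (- w (lastl pb))),
        w(lastl pt := w (lastl pt) + w (lastl pb)))"
  unfolding rv_step_t_def by (simp add: Let_def)

lemma rv_step_eq: "rv_step s = rv_step_t (rv_type s) s"
  by (cases s) (simp add: rv_step_def rv_type_def rv_step_t_def alpha_t_def alpha_b_def lastl_def Let_def)

lemma ut_eq: "bijd pt \<Longrightarrow> u_t (pt,pb,lt,w) = (\<Sum>a\<in>UNIV. lt a) - lt (lastl pt)"
  unfolding u_t_def by (simp add: less_set sum_diff1)

lemma ub_eq: "bijd pb \<Longrightarrow> u_b (pt,pb,lt,w) = (\<Sum>a\<in>UNIV. exp (w a) * lt a) - exp (w (lastl pb)) * lt (lastl pb)"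
  unfolding u_b_def by (simp add: less_set sum_diff1)

lemma d2:
  fixes pt pb :: "'a::finite \<Rightarrow> nat"
  assumes "good pt pb" "u_t (pt,pb,lt,w) \<noteq> u_b (pt,pb,lt,w)"
  shows "2 \<le> card (UNIV::'a set)"
proof (rule ccontr)
  assume "\<not> 2 \<le> card (UNIV::'a set)"
  hence c: "card (UNIV::'a set) \<le> 1" by simp
  have "{a. pt a < card (UNIV::'a set)} = {}" using bijd_range[of pt] assms(1) c unfolding good_def
    by (metis (mono_tags, lifting) empty_Collect_eq le_trans not_le)
  moreover have "{a. pb a < card (UNIV::'a set)} = {}" using bijd_range[of pb] assms(1) c unfolding good_def
    by (metis (mono_tags, lifting) empty_Collect_eq le_trans not_le)
  ultimately show False using assms(2) unfolding u_t_def u_b_def by simp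
qed

lemma neq:
  fixes pt pb :: "'a::finite \<Rightarrow> nat"
  assumes "good pt pb" "2 \<le> card (UNIV::'a set)"
  shows "lastl pt \<noteq> lastl pb"
proof
  assume e: "lastl pt = lastl pb"
  have "{a. pt a \<le> card (UNIV::'a set) - 1} = {a. pb a \<le> card (UNIV::'a set) - 1}"
    using le_set[of pt] le_set[of pb] assms(1) e unfolding good_def by simp
  moreover have "1 \<le> card (UNIV::'a set) - 1 \<and> card (UNIV::'a set) - 1 < card (UNIV::'a set)"
    using assms(2) by linarith
  ultimately show False using assms(1) unfolding good_def irr_def by blast
qed

lemma good_step:
  fixes pt pb :: "'a::finite \<Rightarrow> nat"
  assumes g: "good pt pb" and d: "2 \<le> card (UNIV::'a set)"
    and s: "rv_step_t t (pt,pb,lt,w) = (pt',pb',lt',w')"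
  shows "good pt' pb'"
proof -
  have bt: "bijd pt" and bb: "bijd pb" and ir: "irr pt pb" using g unfolding good_def by auto
  have n: "lastl pt \<noteq> lastl pb" using neq[OF g d] .
  show ?thesis
  proof (cases t)
    case TopT
    hence "pt' = pt" "pb' = move_after pb (lastl pb) (lastl pt)" using s by (auto simp: step_top)
    thus ?thesis using bt bijd_move[OF bb lastl[OF bb]] irr_move[OF ir lastl[OF bb] lastl[OF bt]] n
      unfolding good_def by auto
  next
    case BotT
    hence "pb' = pb" "pt' = move_after pt (lastl pt) (lastl pb)" using s by (auto simp: step_bot)
    thus ?thesis using bb bijd_move[OF bt lastl[OF bt]] irr_sym[OF irr_move[OF irr_sym[OF ir] lastl[OF bt] lastl[OF bb]]] n
      unfolding good_def by auto
  qed
qed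

lemma sum2:
  fixes f :: "'a::finite \<Rightarrow> real"
  assumes "x \<noteq> y"
  shows "(\<Sum>a\<in>UNIV. f a) = f x + f y + (\<Sum>a\<in>UNIV - {x,y}. f a)"
proof -
  have "(\<Sum>a\<in>UNIV. f a) = f x + (\<Sum>a\<in>UNIV - {x}. f a)" by (simp add: sum.remove)
  also have "(\<Sum>a\<in>UNIV - {x}. f a) = f y + (\<Sum>a\<in>UNIV - {x} - {y}. f a)"
    using assms by (intro sum.remove) auto
  also have "UNIV - {x} - {y} = UNIV - {x,y}" by auto
  finally show ?thesis by simp
qed

lemma sum_diff2:
  fixes f g :: "'a::finite \<Rightarrow> real"
  assumes "x \<noteq> y" "\<And>a. a \<noteq> x \<Longrightarrow> a \<noteq> y \<Longrightarrow> g a = f a"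
  shows "(\<Sum>a\<in>UNIV. g a) = (\<Sum>a\<in>UNIV. f a) + (g x - f x) + (g y - f y)"
proof -
  have "(\<Sum>a\<in>UNIV - {x,y}. g a) = (\<Sum>a\<in>UNIV - {x,y}. f a)" using assms(2) by (intro sum.cong) auto
  thus ?thesis using sum2[OF assms(1), of f] sum2[OF assms(1), of g] by simp
qed

definition bal :: "('a::finite \<Rightarrow> real) \<Rightarrow> ('a \<Rightarrow> real) \<Rightarrow> real" where
  "bal lt w = (\<Sum>a\<in>UNIV. exp (w a) * lt a) - (\<Sum>a\<in>UNIV. lt a)"

lemma is_aiem_bal: "is_aiem lt w \<longleftrightarrow> (\<forall>a. lt a > 0) \<and> bal lt w = 0"
  unfolding is_aiem_def bal_def by simp

lemma bal_step:
  assumes n: "lastl pt \<noteq> lastl pb" and s: "rv_step_t t (pt,pb,lt,w) = (pt',pb',lt',w')"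
  shows "bal lt' w' = bal lt w"
proof (cases t)
  case TopT
  define T B where "T = lastl pt" and "B = lastl pb"
  have l: "lt' = lt(T := lt T - exp (w B) * lt B)" and ww: "w' = w(B := w B + w T)"
    using s TopT unfolding T_def B_def by (auto simp: step_top)
  have nn: "T \<noteq> B" using n unfolding T_def B_def .
  have 1: "(\<Sum>a\<in>UNIV. exp (w' a) * lt' a) = (\<Sum>a\<in>UNIV. exp (w a) * lt a)
     + (exp (w' T) * lt' T - exp (w T) * lt T) + (exp (w' B) * lt' B - exp (w B) * lt B)"
    by (rule sum_diff2[OF nn]) (simp add: l ww)
  have 2: "(\<Sum>a\<in>UNIV. lt' a) = (\<Sum>a\<in>UNIV. lt a) + (lt' T - lt T) + (lt' B - lt B)"
    by (rule sum_diff2[OF nn]) (simp add: l ww)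
  show ?thesis unfolding bal_def 1 2 using nn
    by (simp add: l ww exp_add algebra_simps)
next
  case BotT
  define T B where "T = lastl pt" and "B = lastl pb"
  have l: "lt' = lt(T := lt T * exp (- w B), B := lt B - lt T * exp (- w B))" and ww: "w' = w(T := w T + w B)"
    using s BotT unfolding T_def B_def by (auto simp: step_bot)
  have nn: "T \<noteq> B" using n unfolding T_def B_def .
  have 1: "(\<Sum>a\<in>UNIV. exp (w' a) * lt' a) = (\<Sum>a\<in>UNIV. exp (w a) * lt a)
     + (exp (w' T) * lt' T - exp (w T) * lt T) + (exp (w' B) * lt' B - exp (w B) * lt B)"
    by (rule sum_diff2[OF nn]) (simp add: l ww)
  have 2: "(\<Sum>a\<in>UNIV. lt' a) = (\<Sum>a\<in>UNIV. lt a) + (lt' T - lt T) + (lt' B - lt B)"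
    by (rule sum_diff2[OF nn]) (simp add: l ww)
  have e: "exp (w B) * exp (- w B) = 1" by (simp add: exp_minus)
  show ?thesis unfolding bal_def 1 2 using nn e
    by (simp add: l ww exp_add algebra_simps)
qed

lemma step_fwd:
  fixes pt pb :: "'a::finite \<Rightarrow> nat"
  assumes g: "good pt pb" and a: "is_aiem lt w" and u: "u_t (pt,pb,lt,w) \<noteq> u_b (pt,pb,lt,w)"
    and s: "rv_step_t t (pt,pb,lt,w) = (pt',pb',lt',w')" and t: "t = rv_type (pt,pb,lt,w)"
  shows "good pt' pb' \<and> is_aiem lt' w'"
proof -
  have d: "2 \<le> card (UNIV::'a set)" using d2[OF g u] .
  have n: "lastl pt \<noteq> lastl pb" using neq[OF g d] .
  have bt: "bijd pt" and bb: "bijd pb" using g unfolding good_def by auto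
  have b0: "bal lt w = 0" and pos: "\<forall>a. lt a > 0" using a unfolding is_aiem_bal by auto
  have b1: "bal lt' w' = 0" using bal_step[OF n s] b0 by simp
  define T B where "T = lastl pt" and "B = lastl pb"
  have nn: "T \<noteq> B" using n unfolding T_def B_def .
  have eq: "(\<Sum>a\<in>UNIV. exp (w a) * lt a) = (\<Sum>a\<in>UNIV. lt a)" using b0 unfolding bal_def by simp
  have ut: "u_t (pt,pb,lt,w) = (\<Sum>a\<in>UNIV. lt a) - lt T" using ut_eq[OF bt] unfolding T_def .
  have ub: "u_b (pt,pb,lt,w) = (\<Sum>a\<in>UNIV. lt a) - exp (w B) * lt B" using ub_eq[OF bb] eq unfolding B_def by simp
  have p': "\<forall>a. lt' a > 0"
  proof (cases "u_t (pt,pb,lt,w) < u_b (pt,pb,lt,w)")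
    case True
    hence tt: "t = TopT" using t unfolding rv_type_def by simp
    have l: "lt' = lt(T := lt T - exp (w B) * lt B)"
      using s tt unfolding T_def B_def by (auto simp: step_top)
    have "lt T - exp (w B) * lt B > 0" using True ut ub by simp
    thus ?thesis using pos l by simp
  next
    case False
    hence tt: "t = BotT" using t unfolding rv_type_def by simp
    have l: "lt' = lt(T := lt T * exp (- w B), B := lt B - lt T * exp (- w B))"
      using s tt unfolding T_def B_def by (auto simp: step_bot)
    have lt: "lt T < exp (w B) * lt B" using False u ut ub by simp
    have "lt T * exp (- w B) = lt T / exp (w B)" by (simp add: exp_minus divide_inverse)
    also have "\<dots> < lt B" using lt by (simp add: divide_less_eq mult.commute)
    finally have "lt B - lt T * exp (- w B) > 0" by simp
    moreover have "lt T * exp (- w B) > 0" using pos by simp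
    ultimately show ?thesis using pos l nn by simp
  qed
  show ?thesis using good_step[OF g d s] b1 p' unfolding is_aiem_bal by simp
qed

lemma step_bwd:
  fixes pt pb :: "'a::finite \<Rightarrow> nat"
  assumes g: "good pt pb" and d: "2 \<le> card (UNIV::'a set)"
    and s: "rv_step_t t (pt,pb,lt0,w) = (pt',pb',lt0',w')" and a: "is_aiem lt' w'"
  shows "\<exists>lt. is_aiem lt w \<and> u_t (pt,pb,lt,w) \<noteq> u_b (pt,pb,lt,w) \<and> rv_type (pt,pb,lt,w) = t
     \<and> rv_step_t t (pt,pb,lt,w) = (pt',pb',lt',w')"
proof -
  have n: "lastl pt \<noteq> lastl pb" using neq[OF g d] .
  have bt: "bijd pt" and bb: "bijd pb" using g unfolding good_def by auto
  have b1: "bal lt' w' = 0" and pos: "\<forall>a. lt' a > 0" using a unfolding is_aiem_bal by auto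
  define T B where "T = lastl pt" and "B = lastl pb"
  have nn: "T \<noteq> B" using n unfolding T_def B_def .
  show ?thesis
  proof (cases t)
    case TopT
    have sp: "pt' = pt" "pb' = move_after pb B T" "w' = w(B := w B + w T)"
      using s TopT unfolding T_def B_def by (auto simp: step_top)
    define lt where "lt = lt'(T := lt' T + exp (w B) * lt' B)"
    have st: "rv_step_t t (pt,pb,lt,w) = (pt',pb',lt',w')"
      using TopT nn sp by (simp add: lt_def step_top fun_eq_iff flip: T_def B_def)
    have bal: "bal lt w = 0" using bal_step[OF n st] b1 by simp
    have lp: "\<forall>a. lt a > 0" using pos unfolding lt_def by (simp add: add_pos_pos)
    have eq: "(\<Sum>a\<in>UNIV. exp (w a) * lt a) = (\<Sum>a\<in>UNIV. lt a)" using bal unfolding bal_def by simp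
    have ut: "u_t (pt,pb,lt,w) = (\<Sum>a\<in>UNIV. lt a) - lt T" using ut_eq[OF bt] unfolding T_def .
    have ub: "u_b (pt,pb,lt,w) = (\<Sum>a\<in>UNIV. lt a) - exp (w B) * lt B" using ub_eq[OF bb] eq unfolding B_def by simp
    have "u_t (pt,pb,lt,w) < u_b (pt,pb,lt,w)" using ut ub pos nn unfolding lt_def by simp
    thus ?thesis using st lp bal TopT unfolding is_aiem_bal rv_type_def by (intro exI[of _ lt]) auto
  next
    case BotT
    have sp: "pb' = pb" "pt' = move_after pt T B" "w' = w(T := w T + w B)"
      using s BotT unfolding T_def B_def by (auto simp: step_bot)
    define lt where "lt = lt'(T := lt' T * exp (w B), B := lt' B + lt' T)"
    have e: "exp (w B) * exp (- w B) = 1" by (simp add: exp_minus)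
    have st: "rv_step_t t (pt,pb,lt,w) = (pt',pb',lt',w')"
      using BotT nn sp e by (simp add: lt_def step_bot fun_eq_iff algebra_simps flip: T_def B_def)
    have bal: "bal lt w = 0" using bal_step[OF n st] b1 by simp
    have lp: "\<forall>a. lt a > 0" using pos unfolding lt_def by (simp add: add_pos_pos)
    have eq: "(\<Sum>a\<in>UNIV. exp (w a) * lt a) = (\<Sum>a\<in>UNIV. lt a)" using bal unfolding bal_def by simp
    have ut: "u_t (pt,pb,lt,w) = (\<Sum>a\<in>UNIV. lt a) - lt T" using ut_eq[OF bt] unfolding T_def .
    have ub: "u_b (pt,pb,lt,w) = (\<Sum>a\<in>UNIV. lt a) - exp (w B) * lt B" using ub_eq[OF bb] eq unfolding B_def by simp
    have "exp (w B) * lt B - lt T = exp (w B) * lt' B" using nn unfolding lt_def by (simp add: algebra_simps)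
    moreover have "exp (w B) * lt' B > 0" using pos by simp
    ultimately have "u_b (pt,pb,lt,w) < u_t (pt,pb,lt,w)" using ut ub by simp
    thus ?thesis using st lp bal BotT unfolding is_aiem_bal rv_type_def by (intro exI[of _ lt]) auto
  qed
qed

fun fin :: "rtype list \<Rightarrow> ('a::finite) aiem \<Rightarrow> 'a aiem" where
  "fin [] s = s"
| "fin (t # ts) s = fin ts (rv_step_t t s)"

lemma step_indep:
  assumes "rv_step_t t (pt,pb,lt,w) = (pt1,pb1,lt1,w1)" "rv_step_t t (pt,pb,lt2,w2) = (pt2,pb2,lt3,w3)"
  shows "pt1 = pt2 \<and> pb1 = pb2 \<and> (w = w2 \<longrightarrow> w1 = w3)"
  using assms by (cases t) (auto simp: step_top step_bot)

lemma fin_indep: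
  "fin \<gamma> (pt,pb,lt,w) = (pt1,pb1,lt1,w1) \<Longrightarrow> fin \<gamma> (pt,pb,lt2,w2) = (pt2,pb2,lt3,w3)
   \<Longrightarrow> pt1 = pt2 \<and> pb1 = pb2 \<and> (w = w2 \<longrightarrow> w1 = w3)"
proof (induction \<gamma> arbitrary: pt pb lt w lt2 w2)
  case Nil
  then show ?case by simp
next
  case (Cons t ts)
  obtain pa pb' la wa where a: "rv_step_t t (pt,pb,lt,w) = (pa,pb',la,wa)" by (cases "rv_step_t t (pt,pb,lt,w)") auto
  obtain pc pd lc wc where c: "rv_step_t t (pt,pb,lt2,w2) = (pc,pd,lc,wc)" by (cases "rv_step_t t (pt,pb,lt2,w2)") auto
  have e: "pa = pc" "pb' = pd" "w = w2 \<longrightarrow> wa = wc" using step_indep[OF a c] by auto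
  show ?case using Cons.IH[of pa pb' la wa lc wc] Cons.prems a c e by auto
qed

lemma step_zero: "rv_step_t t (pt,pb,lt,(\<lambda>_. 0)) = (pt',pb',lt',w') \<Longrightarrow> w' = (\<lambda>_. 0)"
  by (cases t) (auto simp: step_top step_bot fun_eq_iff)

lemma fin_zero: "fin \<gamma> (pt,pb,lt,(\<lambda>_. 0)) = (pt',pb',lt',w') \<Longrightarrow> w' = (\<lambda>_. 0)"
proof (induction \<gamma> arbitrary: pt pb lt)
  case Nil
  then show ?case by simp
next
  case (Cons t ts)
  obtain pa pb' la wa where a: "rv_step_t t (pt,pb,lt,(\<lambda>_. 0)) = (pa,pb',la,wa)" by (cases "rv_step_t t (pt,pb,lt,(\<lambda>_. 0))") auto
  have "wa = (\<lambda>_. 0)" using step_zero[OF a] .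
  thus ?case using Cons a by auto
qed

lemma fwd:
  "good pt pb \<Longrightarrow> is_aiem lt w \<Longrightarrow> rv_follows (pt,pb,lt,w) \<gamma> \<Longrightarrow> fin \<gamma> (pt,pb,lt,w) = (pt1,pb1,lt1,w1)
   \<Longrightarrow> is_aiem lt1 w1"
proof (induction \<gamma> arbitrary: pt pb lt w)
  case Nil
  then show ?case by simp
next
  case (Cons t ts)
  obtain pa pb' la wa where a: "rv_step_t t (pt,pb,lt,w) = (pa,pb',la,wa)" by (cases "rv_step_t t (pt,pb,lt,w)") auto
  have f: "u_t (pt,pb,lt,w) \<noteq> u_b (pt,pb,lt,w)" "rv_type (pt,pb,lt,w) = t" "rv_follows (rv_step (pt,pb,lt,w)) ts"
    using Cons.prems(3) by auto
  have r: "rv_step (pt,pb,lt,w) = (pa,pb',la,wa)" using rv_step_eq[of "(pt,pb,lt,w)"] f(2) a by simp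
  have "good pa pb' \<and> is_aiem la wa" using step_fwd[OF Cons.prems(1,2) f(1) a] f(2) by simp
  thus ?case using Cons.IH[of pa pb' la wa] f(3) r a Cons.prems(4) by simp
qed

lemma bwd:
  fixes pt pb :: "'a::finite \<Rightarrow> nat"
  shows "good pt pb \<Longrightarrow> (\<gamma> \<noteq> [] \<Longrightarrow> 2 \<le> card (UNIV::'a set)) \<Longrightarrow> fin \<gamma> (pt,pb,lt0,w) = (pt1,pb1,lt1,w1)
   \<Longrightarrow> is_aiem lt' w1 \<Longrightarrow> \<exists>lt. is_aiem lt w \<and> rv_follows (pt,pb,lt,w) \<gamma> \<and> fin \<gamma> (pt,pb,lt,w) = (pt1,pb1,lt',w1)"
proof (induction \<gamma> arbitrary: pt pb lt0 w)
  case Nil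
  then show ?case by auto
next
  case (Cons t ts)
  have d: "2 \<le> card (UNIV::'a set)" using Cons.prems(2) by simp
  obtain pa pb' la wa where a: "rv_step_t t (pt,pb,lt0,w) = (pa,pb',la,wa)" by (cases "rv_step_t t (pt,pb,lt0,w)") auto
  have g: "good pa pb'" using good_step[OF Cons.prems(1) d a] .
  have fa: "fin ts (pa,pb',la,wa) = (pt1,pb1,lt1,w1)" using Cons.prems(3) a by simp
  obtain l2 where l2: "is_aiem l2 wa" "rv_follows (pa,pb',l2,wa) ts" "fin ts (pa,pb',l2,wa) = (pt1,pb1,lt',w1)"
    using Cons.IH[OF g _ fa Cons.prems(4)] d by blast
  obtain lt where lt: "is_aiem lt w" "u_t (pt,pb,lt,w) \<noteq> u_b (pt,pb,lt,w)" "rv_type (pt,pb,lt,w) = t"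
     "rv_step_t t (pt,pb,lt,w) = (pa,pb',l2,wa)"
    using step_bwd[OF Cons.prems(1) d a l2(1)] by blast
  have "rv_step (pt,pb,lt,w) = (pa,pb',l2,wa)" using rv_step_eq[of "(pt,pb,lt,w)"] lt by simp
  thus ?case using lt l2 by (intro exI[of _ lt]) simp
qed

lemma inv_step:
  assumes n: "lastl pt \<noteq> lastl pb"
    and s0: "rv_step_t t (pt,pb,lam,(\<lambda>_. 0)) = (pt',pb',lam',z)"
    and s1: "rv_step_t t (pt,pb,lam,v) = (pt'',pb'',l'',v')"
  shows "(\<Sum>a\<in>UNIV. lam a * v a) = (\<Sum>a\<in>UNIV. lam' a * v' a)"
proof -
  define T B where "T = lastl pt" and "B = lastl pb"
  have nn: "T \<noteq> B" using n unfolding T_def B_def .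
  show ?thesis
  proof (cases t)
    case TopT
    have l: "lam' = lam(T := lam T - lam B)" "v' = v(B := v B + v T)"
      using s0 s1 TopT unfolding T_def B_def by (auto simp: step_top)
    have "(\<Sum>a\<in>UNIV. lam' a * v' a) = (\<Sum>a\<in>UNIV. lam a * v a) + (lam' T * v' T - lam T * v T) + (lam' B * v' B - lam B * v B)"
      by (rule sum_diff2[OF nn]) (simp add: l)
    thus ?thesis using nn by (simp add: l algebra_simps)
  next
    case BotT
    have l: "lam' = lam(T := lam T, B := lam B - lam T)" "v' = v(T := v T + v B)"
      using s0 s1 BotT unfolding T_def B_def by (auto simp: step_bot)
    have "(\<Sum>a\<in>UNIV. lam' a * v' a) = (\<Sum>a\<in>UNIV. lam a * v a) + (lam' T * v' T - lam T * v T) + (lam' B * v' B - lam B * v B)"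
      by (rule sum_diff2[OF nn]) (simp add: l)
    thus ?thesis using nn by (simp add: l algebra_simps)
  qed
qed

lemma inv:
  fixes pt pb :: "'a::finite \<Rightarrow> nat"
  shows "good pt pb \<Longrightarrow> rv_follows (pt,pb,lam,(\<lambda>_. 0)) \<gamma> \<Longrightarrow> fin \<gamma> (pt,pb,lam,(\<lambda>_. 0)) = (pt1,pb1,lam1,z)
   \<Longrightarrow> fin \<gamma> (pt,pb,lam,v) = (pt2,pb2,lt2,v1) \<Longrightarrow> (\<Sum>a\<in>UNIV. lam a * v a) = (\<Sum>a\<in>UNIV. lam1 a * v1 a)"
proof (induction \<gamma> arbitrary: pt pb lam v pt2 pb2 lt2 v1)
  case Nil
  then show ?case by simp
next
  case (Cons t ts)
  have f: "u_t (pt,pb,lam,(\<lambda>_. 0)) \<noteq> u_b (pt,pb,lam,(\<lambda>_. 0))" "rv_type (pt,pb,lam,(\<lambda>_. 0)) = t"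
     "rv_follows (rv_step (pt,pb,lam,(\<lambda>_. 0))) ts"
    using Cons.prems(2) by auto
  have d: "2 \<le> card (UNIV::'a set)" using d2[OF Cons.prems(1) f(1)] .
  have n: "lastl pt \<noteq> lastl pb" using neq[OF Cons.prems(1) d] .
  obtain pa pb' la za where a: "rv_step_t t (pt,pb,lam,(\<lambda>_. 0)) = (pa,pb',la,za)" by (cases "rv_step_t t (pt,pb,lam,(\<lambda>_. 0))") auto
  obtain pc pd lc vc where c: "rv_step_t t (pt,pb,lam,v) = (pc,pd,lc,vc)" by (cases "rv_step_t t (pt,pb,lam,v)") auto
  have e: "pa = pc" "pb' = pd" using step_indep[OF a c] by auto
  have z: "za = (\<lambda>_. 0)" using step_zero[OF a] .
  have g: "good pa pb'" using good_step[OF Cons.prems(1) d a] .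
  have r: "rv_step (pt,pb,lam,(\<lambda>_. 0)) = (pa,pb',la,za)" using rv_step_eq[of "(pt,pb,lam,(\<lambda>_. 0))"] f(2) a by simp
  obtain q1 q2 q3 q4 where q: "fin ts (pa,pb',la,vc) = (q1,q2,q3,q4)" by (cases "fin ts (pa,pb',la,vc)") auto
  have fc: "fin ts (pa,pb',lc,vc) = (pt2,pb2,lt2,v1)" using Cons.prems(4) c e by simp
  have q4: "q4 = v1" using fin_indep[OF q fc] by simp
  have "(\<Sum>a\<in>UNIV. la a * vc a) = (\<Sum>a\<in>UNIV. lam1 a * q4 a)"
    using Cons.IH[OF g _ _ q] f(3) r z Cons.prems(3) a by simp
  moreover have "(\<Sum>a\<in>UNIV. lam a * v a) = (\<Sum>a\<in>UNIV. la a * vc a)" using inv_step[OF n a c] .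
  ultimately show ?case using q4 by simp
qed

lemma sum_upd1:
  fixes f :: "'a::finite \<Rightarrow> real"
  shows "(\<Sum>a\<in>UNIV. ((\<lambda>_. 1)(b := c)) a * f a) = (\<Sum>a\<in>UNIV. f a) + (c - 1) * f b"
proof -
  have "(\<Sum>a\<in>UNIV. ((\<lambda>_. 1)(b := c)) a * f a) = c * f b + (\<Sum>a\<in>UNIV - {b}. ((\<lambda>_. 1)(b := c)) a * f a)"
    using sum.remove[of UNIV b "\<lambda>a. ((\<lambda>_. 1)(b := c)) a * f a"] by simp
  also have "(\<Sum>a\<in>UNIV - {b}. ((\<lambda>_. 1)(b := c)) a * f a) = (\<Sum>a\<in>UNIV - {b}. f a)"
    by (intro sum.cong) auto
  moreover have "(\<Sum>a\<in>UNIV. f a) = f b + (\<Sum>a\<in>UNIV - {b}. f a)" using sum.remove[of UNIV b f] by simp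
  ultimately show ?thesis by (simp add: algebra_simps)
qed

lemma mixed:
  fixes f :: "'a::finite \<Rightarrow> real"
  shows "(\<exists>x. (\<forall>a. x a > 0) \<and> (\<Sum>a\<in>UNIV. x a * f a) = 0) \<longleftrightarrow>
         ((\<forall>a. f a = 0) \<or> ((\<exists>a. f a > 0) \<and> (\<exists>b. f b < 0)))"
proof
  assume "\<exists>x. (\<forall>a. x a > 0) \<and> (\<Sum>a\<in>UNIV. x a * f a) = 0"
  then obtain x where x: "\<forall>a. x a > 0" "(\<Sum>a\<in>UNIV. x a * f a) = 0" by blast
  show "(\<forall>a. f a = 0) \<or> ((\<exists>a. f a > 0) \<and> (\<exists>b. f b < 0))"
  proof (rule ccontr)
    assume c: "\<not> ?thesis"
    show False
    proof (cases "\<exists>a. f a > 0")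
      case True
      hence "\<forall>b. f b \<ge> 0" using c by (meson not_le)
      hence "\<forall>a. x a * f a \<ge> 0" using x(1) by (simp add: less_imp_le)
      hence "\<forall>a. x a * f a = 0" using x(2) sum_nonneg_eq_0_iff[of UNIV "\<lambda>a. x a * f a"] by simp
      hence "\<forall>a. f a = 0" using x(1) by (metis mult_eq_0_iff less_irrefl)
      thus False using c by simp
    next
      case False
      hence "\<forall>b. - f b \<ge> 0" by (simp add: not_less)
      hence "\<forall>a. x a * (- f a) \<ge> 0" using x(1) by (simp add: less_imp_le mult_nonneg_nonpos)
      moreover have "(\<Sum>a\<in>UNIV. x a * (- f a)) = 0" using x(2) by (simp add: sum_negf)
      ultimately have "\<forall>a. x a * (- f a) = 0" using sum_nonneg_eq_0_iff[of UNIV "\<lambda>a. x a * (- f a)"] by simp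
      hence "\<forall>a. f a = 0" using x(1) by (metis mult_eq_0_iff less_irrefl neg_equal_0_iff_equal)
      thus False using c by simp
    qed
  qed
next
  assume h: "(\<forall>a. f a = 0) \<or> ((\<exists>a. f a > 0) \<and> (\<exists>b. f b < 0))"
  show "\<exists>x. (\<forall>a. x a > 0) \<and> (\<Sum>a\<in>UNIV. x a * f a) = 0"
  proof (cases "\<forall>a. f a = 0")
    case True
    thus ?thesis by (intro exI[of _ "\<lambda>_. 1"]) simp
  next
    case False
    then obtain a b where ab: "f a > 0" "f b < 0" using h by blast
    define S where "S = (\<Sum>a\<in>UNIV. f a)"
    show ?thesis
    proof (cases "S \<ge> 0")
      case True
      define c where "c = 1 + S / (- f b)"
      have "c > 0" unfolding c_def using True ab by (simp add: add_pos_nonneg divide_nonneg_pos)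
      hence "\<forall>z. ((\<lambda>_. 1)(b := c)) z > (0::real)" by simp
      moreover have "(c - 1) * f b = - S" unfolding c_def using ab by (simp add: field_simps)
      ultimately show ?thesis using sum_upd1[of b c f] unfolding S_def by (intro exI[of _ "(\<lambda>_. 1)(b := c)"]) simp
    next
      case False
      define c where "c = 1 + (- S) / f a"
      have "c > 0" unfolding c_def using False ab by (simp add: add_pos_nonneg divide_nonneg_pos)
      hence "\<forall>z. ((\<lambda>_. 1)(a := c)) z > (0::real)" by simp
      moreover have "(c - 1) * f a = - S" unfolding c_def using ab by (simp add: field_simps)
      ultimately show ?thesis using sum_upd1[of a c f] unfolding S_def by (intro exI[of _ "(\<lambda>_. 1)(a := c)"]) simp
    qed
  qed
qed

lemma Q:
  fixes W :: "'a::finite \<Rightarrow> real"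
  shows "(\<exists>lt. is_aiem lt W) \<longleftrightarrow> (\<exists>x. (\<forall>a. x a > 0) \<and> (\<Sum>a\<in>UNIV. x a * W a) = 0)"
proof -
  have 1: "is_aiem lt W \<longleftrightarrow> (\<forall>a. lt a > 0) \<and> (\<Sum>a\<in>UNIV. lt a * (exp (W a) - 1)) = 0" for lt
    unfolding is_aiem_def by (simp add: algebra_simps sum_subtractf)
  have "(\<exists>lt. is_aiem lt W) \<longleftrightarrow> ((\<forall>a. exp (W a) - 1 = 0) \<or> ((\<exists>a. exp (W a) - 1 > 0) \<and> (\<exists>b. exp (W b) - 1 < 0)))"
    unfolding 1 by (rule mixed)
  also have "\<dots> \<longleftrightarrow> ((\<forall>a. W a = 0) \<or> ((\<exists>a. W a > 0) \<and> (\<exists>b. W b < 0)))" by simp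
  also have "\<dots> \<longleftrightarrow> (\<exists>x. (\<forall>a. x a > 0) \<and> (\<Sum>a\<in>UNIV. x a * W a) = 0)" by (rule mixed[symmetric])
  finally show ?thesis .
qed

lemma aiem_zero: "is_aiem lt (\<lambda>_. 0) \<longleftrightarrow> (\<forall>a. lt a > 0)"
  unfolding is_aiem_def by simp

theorem lemma2:
  fixes pt pb :: "'a::finite \<Rightarrow> nat" and w :: "'a \<Rightarrow> real" and \<gamma> :: "rtype list"
  assumes "comb_data pt pb" and "irreducible pt pb"
  shows "(\<exists>lt. is_aiem lt w \<and> rv_follows (pt, pb, lt, w) \<gamma>) \<longleftrightarrow>
         (\<exists>lam. (\<forall>a. lam a > 0) \<and> (\<Sum>a\<in>UNIV. lam a * w a) = 0 \<and> rv_follows (pt, pb, lam, (\<lambda>_. 0)) \<gamma>)"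
proof
  have g: "good pt pb" using assms good_iff by blast
  {
    fix s :: "'a aiem" and l v
    assume "rv_follows s \<gamma>" "s = (pt,pb,l,v)"
    hence "\<gamma> \<noteq> [] \<Longrightarrow> 2 \<le> card (UNIV::'a set)" using d2[OF g] by (cases \<gamma>) auto
  } note dd = this
  {
    assume "\<exists>lt. is_aiem lt w \<and> rv_follows (pt, pb, lt, w) \<gamma>"
    then obtain lt where lt: "is_aiem lt w" "rv_follows (pt, pb, lt, w) \<gamma>" by blast
    obtain p1 p2 l1 W where f1: "fin \<gamma> (pt,pb,lt,w) = (p1,p2,l1,W)" by (cases "fin \<gamma> (pt,pb,lt,w)") auto
    have "is_aiem l1 W" using fwd[OF g lt f1] .
    then obtain x where x: "\<forall>a. x a > 0" "(\<Sum>a\<in>UNIV. x a * W a) = 0" using Q by blast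
    obtain p3 p4 l3 Z where f2: "fin \<gamma> (pt,pb,lt,(\<lambda>_. 0)) = (p3,p4,l3,Z)" by (cases "fin \<gamma> (pt,pb,lt,(\<lambda>_. 0))") auto
    have Z: "Z = (\<lambda>_. 0)" using fin_zero[OF f2] .
    have "is_aiem x Z" unfolding Z aiem_zero using x(1) .
    then obtain lam where lam: "is_aiem lam (\<lambda>_. 0)" "rv_follows (pt,pb,lam,(\<lambda>_. 0)) \<gamma>"
      "fin \<gamma> (pt,pb,lam,(\<lambda>_. 0)) = (p3,p4,x,Z)"
      using bwd[OF g _ f2] dd[OF lt(2) refl] by blast
    obtain p5 p6 l5 v1 where f3: "fin \<gamma> (pt,pb,lam,w) = (p5,p6,l5,v1)" by (cases "fin \<gamma> (pt,pb,lam,w)") auto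
    have "v1 = W" using fin_indep[OF f3 f1] by simp
    hence "(\<Sum>a\<in>UNIV. lam a * w a) = 0" using inv[OF g lam(2) lam(3) f3] x(2) by simp
    thus "\<exists>lam. (\<forall>a. lam a > 0) \<and> (\<Sum>a\<in>UNIV. lam a * w a) = 0 \<and> rv_follows (pt, pb, lam, (\<lambda>_. 0)) \<gamma>"
      using lam aiem_zero by blast
  }
  {
    assume "\<exists>lam. (\<forall>a. lam a > 0) \<and> (\<Sum>a\<in>UNIV. lam a * w a) = 0 \<and> rv_follows (pt, pb, lam, (\<lambda>_. 0)) \<gamma>"
    then obtain lam where lam: "\<forall>a. lam a > 0" "(\<Sum>a\<in>UNIV. lam a * w a) = 0" "rv_follows (pt, pb, lam, (\<lambda>_. 0)) \<gamma>"
      by blast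
    obtain p1 p2 l1 Z where f1: "fin \<gamma> (pt,pb,lam,(\<lambda>_. 0)) = (p1,p2,l1,Z)" by (cases "fin \<gamma> (pt,pb,lam,(\<lambda>_. 0))") auto
    have Z: "Z = (\<lambda>_. 0)" using fin_zero[OF f1] .
    have "is_aiem l1 Z" using fwd[OF g _ lam(3) f1] lam(1) aiem_zero by blast
    hence l1: "\<forall>a. l1 a > 0" unfolding Z aiem_zero .
    obtain p3 p4 l3 W where f2: "fin \<gamma> (pt,pb,lam,w) = (p3,p4,l3,W)" by (cases "fin \<gamma> (pt,pb,lam,w)") auto
    have "(\<Sum>a\<in>UNIV. l1 a * W a) = 0" using inv[OF g lam(3) f1 f2] lam(2) by simp
    then obtain lt' where "is_aiem lt' W" using Q l1 by blast
    then obtain lt where "is_aiem lt w" "rv_follows (pt,pb,lt,w) \<gamma>"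
      using bwd[OF g _ f2] dd[OF lam(3) refl] by blast
    thus "\<exists>lt. is_aiem lt w \<and> rv_follows (pt, pb, lt, w) \<gamma>" by blast
  }
qed

end
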